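(* Let $(X,d)$ be $\delta$-hyperbolic with base point $o$, let $\mathcal S$ be a $(1/100,C_0,D)$-Schottky set, and consider the pivotal-time construction below. If $P_n=\{k_1<\dots<k_p\}$ and $D\ge 6C_0+13\delta+1$, then for every $i=2,\dots,p$ the sequence $y^-_{k_i},\,y_{k_i},\,y^-_{n+1}$ is a $(2C_0+5\delta,\ D-6C_0-13\delta)$-chain.
   Context: Gromov product $(x|y)_z=\frac12(d(x,z)+d(z,y)-d(x,y))$. A sequence $x_0,\dots,x_n$ is a $(C,D)$-chain if $(x_{i-1}|x_{i+1})_{x_i}\le C$ for $1\le i\le n-1$ and $d(x_{i-1},x_i)\ge D$ for $1\le i\le n$. For $C\ge0$, $D'=2C+2\delta+1$, the chain shadow $\mathcal{CS}_x(y,C)$ is the set of $z$ for which there is a $(C,D')$-chain $x_0=x,x_1,\dots,x_n=z$ with $(x_0|x_1)_y\le C$. A finite set $\mathcal S$ of isometries is an $(\epsilon,C,D)$-Schottky set if for all $x,y\in X$: $\#\{s:(x|s y)_o\le C\}\ge(1-\epsilon)\#\mathcal S$, $\#\{s:(x|s^{-1}y)_o\le C\}\ge(1-\epsilon)\#\mathcal S$, and $d(o,so)\ge D$ for all $s\in\mathcal S$. Construction: fix isometries $u_0,u_1,\dots$ and elements $s_i=a_ib_i$ with $a_i,b_i\in\mathcal S$. Put $y_n^-=u_0s_1u_1\cdots s_{n-1}u_{n-1}o$, $y_n=u_0s_1u_1\cdots s_{n-1}u_{n-1}a_no$, $y_n^+=u_0s_1u_1\cdots s_{n-1}u_{n-1}a_nb_no$.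 Pivotal times: $P_0=\emptyset$; given $P_{n-1}$ let $k=\max P_{n-1}$ (and $k=0$, $y_0:=o$ if $P_{n-1}=\emptyset$). If the local geodesic condition $(y_k|y_n)_{y_n^-}\le C_0$, $(y_n^-|y_n^+)_{y_n}\le C_0$, $(y_n|y_{n+1}^-)_{y_n^+}\le C_0$ holds, set $P_n=P_{n-1}\cup\{n\}$; otherwise let $m$ be the largest element of $P_{n-1}$ with $y^-_{n+1}\in\mathcal{CS}_{y_m}(y_m^+,C_0+\delta)$ and set $P_n=P_{n-1}\cap\{1,\dots,m\}$ ($P_n=\emptyset$ if no such $m$). *)

theory Defs
  imports Main "HOL-Analysis.Analysis"
begin

definition gromov :: "'a::metric_space \<Rightarrow> 'a \<Rightarrow> 'a \<Rightarrow> real" where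
  "gromov x y z = (dist x z + dist z y - dist x y) / 2"

definition hyperbolic :: "real \<Rightarrow> 'a::metric_space itself \<Rightarrow> bool" where
  "hyperbolic \<delta> _ \<longleftrightarrow> (\<forall>x y z w::'a. gromov x z w \<ge> min (gromov x y w) (gromov y z w) - \<delta>)"

definition isometry :: "('a::metric_space \<Rightarrow> 'a) \<Rightarrow> bool" where
  "isometry f \<longleftrightarrow> bij f \<and> (\<forall>x y. dist (f x) (f y) = dist x y)"

definition is_chain :: "real \<Rightarrow> real \<Rightarrow> 'a::metric_space list \<Rightarrow> bool" where
  "is_chain C D xs \<longleftrightarrow>
     (\<forall>i. 1 \<le> i \<and> i + 1 < length xs \<longrightarrow> gromov (xs ! (i - 1)) (xs ! (i + 1)) (xs ! i) \<le> C) \<and>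
     (\<forall>i. 1 \<le> i \<and> i < length xs \<longrightarrow> dist (xs ! (i - 1)) (xs ! i) \<ge> D)"

definition chain_shadow :: "real \<Rightarrow> 'a::metric_space \<Rightarrow> 'a \<Rightarrow> real \<Rightarrow> 'a set" where
  "chain_shadow \<delta> x y C = {z. \<exists>xs. 2 \<le> length xs \<and> xs ! 0 = x \<and> last xs = z \<and>
      is_chain C (2 * C + 2 * \<delta> + 1) xs \<and> gromov (xs ! 0) (xs ! 1) y \<le> C}"

definition schottky :: "real \<Rightarrow> real \<Rightarrow> real \<Rightarrow> 'a::metric_space \<Rightarrow> ('a \<Rightarrow> 'a) set \<Rightarrow> bool" where
  "schottky \<epsilon> C D bp S \<longleftrightarrow> finite S \<and> (\<forall>s\<in>S. isometry s) \<and>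
     (\<forall>x y. real (card {s\<in>S. gromov x (s y) bp \<le> C}) \<ge> (1 - \<epsilon>) * real (card S)) \<and>
     (\<forall>x y. real (card {s\<in>S. gromov x (inv s y) bp \<le> C}) \<ge> (1 - \<epsilon>) * real (card S)) \<and>
     (\<forall>s\<in>S. dist bp (s bp) \<ge> D)"

text \<open>Prefix W n = u_0 s_1 u_1 ... s_{n-1} u_{n-1} (W 0 = id), with s_i = a_i b_i.\<close>
fun prefix :: "(nat \<Rightarrow> 'a \<Rightarrow> 'a) \<Rightarrow> (nat \<Rightarrow> 'a \<Rightarrow> 'a) \<Rightarrow> (nat \<Rightarrow> 'a \<Rightarrow> 'a) \<Rightarrow> nat \<Rightarrow> 'a \<Rightarrow> 'a" where
  "prefix u a b 0 = id"
| "prefix u a b (Suc n) = prefix u a b n \<circ> (if n = 0 then id else a n \<circ> b n) \<circ> u n"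

definition ym :: "'a \<Rightarrow> (nat \<Rightarrow> 'a \<Rightarrow> 'a) \<Rightarrow> (nat \<Rightarrow> 'a \<Rightarrow> 'a) \<Rightarrow> (nat \<Rightarrow> 'a \<Rightarrow> 'a) \<Rightarrow> nat \<Rightarrow> 'a" where
  "ym bp u a b n = prefix u a b n bp"

definition yy :: "'a \<Rightarrow> (nat \<Rightarrow> 'a \<Rightarrow> 'a) \<Rightarrow> (nat \<Rightarrow> 'a \<Rightarrow> 'a) \<Rightarrow> (nat \<Rightarrow> 'a \<Rightarrow> 'a) \<Rightarrow> nat \<Rightarrow> 'a" where
  "yy bp u a b n = prefix u a b n (a n bp)"

definition yp :: "'a \<Rightarrow> (nat \<Rightarrow> 'a \<Rightarrow> 'a) \<Rightarrow> (nat \<Rightarrow> 'a \<Rightarrow> 'a) \<Rightarrow> (nat \<Rightarrow> 'a \<Rightarrow> 'a) \<Rightarrow> nat \<Rightarrow> 'a" where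
  "yp bp u a b n = prefix u a b n (a n (b n bp))"

fun pivotal :: "real \<Rightarrow> real \<Rightarrow> 'a::metric_space \<Rightarrow> (nat \<Rightarrow> 'a \<Rightarrow> 'a) \<Rightarrow> (nat \<Rightarrow> 'a \<Rightarrow> 'a) \<Rightarrow> (nat \<Rightarrow> 'a \<Rightarrow> 'a) \<Rightarrow> nat \<Rightarrow> nat set" where
  "pivotal \<delta> C0 bp u a b 0 = {}"
| "pivotal \<delta> C0 bp u a b (Suc n) =
     (let P = pivotal \<delta> C0 bp u a b n;
          m = Suc n;
          yk = (if P = {} then bp else yy bp u a b (Max P))
      in if gromov yk (yy bp u a b m) (ym bp u a b m) \<le> C0
            \<and> gromov (ym bp u a b m) (yp bp u a b m) (yy bp u a b m) \<le> C0
            \<and> gromov (yy bp u a b m) (ym bp u a b (Suc m)) (yp bp u a b m) \<le> C0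
         then insert m P
         else (let M = {j \<in> P. ym bp u a b (Suc m) \<in> chain_shadow \<delta> (yy bp u a b j) (yp bp u a b j) (C0 + \<delta>)}
               in if M = {} then {} else P \<inter> {1..Max M}))"

end

theory Submission
  imports Defs
begin


lemma hyp_F3:
  assumes "hyperbolic \<delta> TYPE('a::metric_space)"
  shows "gromov (x::'a) z w \<ge> min (gromov x y w) (gromov y z w) - \<delta>"
  using assms unfolding hyperbolic_def by blast

lemma hyp_nonneg:
  assumes "hyperbolic \<delta> TYPE('a::metric_space)" shows "\<delta> \<ge> 0"
  using hyp_F3[OF assms, of "undefined::'a" undefined undefined undefined]
  by (simp add: gromov_def)

lemma gromov_sym: "gromov x y z = gromov y x z"
  unfolding gromov_def by (simp add: dist_commute)

lemma gromov_trans: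
  assumes hyp: "hyperbolic \<delta> TYPE('a::metric_space)"
  shows "gromov (x::'a) z y \<le> gromov x w y + gromov x z w + \<delta>"
proof -
  have "dist y z \<le> dist y w + dist w z" by (rule dist_triangle)
  moreover have "\<delta> \<ge> 0" by (rule hyp_nonneg[OF hyp])
  ultimately show ?thesis unfolding gromov_def by (simp add: field_simps)
qed

lemma junction:
  assumes hyp: "hyperbolic \<delta> TYPE('a::metric_space)"
    and "gromov (x::'a) p y \<le> A" "gromov y w p \<le> B" "dist y p \<ge> E" "E - B > A + \<delta>"
  shows "gromov x w y \<le> A + \<delta>" and "dist y w \<ge> E - B"
proof -
  have h: "gromov x p y \<ge> min (gromov x w y) (gromov w p y) - \<delta>" using hyp_F3[OF hyp] .
  have e: "gromov w p y = dist y p - gromov y w p"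
    unfolding gromov_def by (simp add: dist_commute field_simps)
  have t: "dist y p \<le> dist y w + dist w p" by (rule dist_triangle)
  show "gromov x w y \<le> A + \<delta>" using h e assms(2-5) unfolding min_def
    by (auto split: if_splits)
  show "dist y w \<ge> E - B" using e t assms(3,4) unfolding gromov_def
    by (simp add: dist_commute)
qed

lemma chain_idx:
  assumes hyp: "hyperbolic \<delta> TYPE('a::metric_space)"
    and j: "\<And>i. 1 \<le> i \<Longrightarrow> i+1 \<le> N \<Longrightarrow> gromov (x (i-1)) (x (i+1)) (x i) \<le> C"
    and dd: "\<And>i. 1 \<le> i \<Longrightarrow> i \<le> N \<Longrightarrow> dist (x (i-1)) (x i) \<ge> 2*C+2*\<delta>+1"
    and pos: "C + \<delta> \<ge> 0"
  shows "i < N \<Longrightarrow> gromov ((x::nat\<Rightarrow>'a) i) (x N) (x (Suc i)) \<le> C + \<delta>"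
proof (induction "N - Suc i" arbitrary: i)
  case 0
  then have "Suc i = N" by simp
  then show ?case using pos by (simp add: gromov_def)
next
  case (Suc m)
  then have lt: "Suc i < N" by simp
  have IH: "gromov (x (Suc i)) (x N) (x (Suc (Suc i))) \<le> C + \<delta>"
    using Suc.hyps(1)[of "Suc i"] Suc.hyps(2) lt by simp
  have j1: "gromov (x i) (x (Suc (Suc i))) (x (Suc i)) \<le> C"
    using j[of "Suc i"] lt by simp
  have d1: "dist (x (Suc i)) (x (Suc (Suc i))) \<ge> 2*C+2*\<delta>+1"
    using dd[of "Suc (Suc i)"] lt by simp
  show ?case using junction(1)[OF hyp j1 IH d1] by simp
qed

lemma chain_list:
  assumes hyp: "hyperbolic \<delta> TYPE('a::metric_space)"
    and ch: "is_chain C (2*C+2*\<delta>+1) (xs::'a list)" and len: "2 \<le> length xs" and pos: "C + \<delta> \<ge> 0"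
  shows "gromov (xs!0) (last xs) (xs!1) \<le> C + \<delta>"
proof -
  have "gromov (xs!0) (xs!(length xs - 1)) (xs!(Suc 0)) \<le> C + \<delta>"
    apply (rule chain_idx[OF hyp _ _ pos, of "length xs - 1" "(!) xs" 0])
    using ch len unfolding is_chain_def by auto
  moreover have "last xs = xs!(length xs - 1)" using len by (subst last_conv_nth) auto
  ultimately show ?thesis by simp
qed

lemma shadow:
  assumes hyp: "hyperbolic \<delta> TYPE('a::metric_space)"
    and z: "z \<in> chain_shadow \<delta> (x::'a) y C" and C: "C \<ge> 0"
  shows "gromov x z y \<le> 2*C + 2*\<delta>"
proof -
  obtain xs where xs: "2 \<le> length xs" "xs!0 = x" "last xs = z"
    "is_chain C (2 * C + 2 * \<delta> + 1) xs" "gromov (xs ! 0) (xs ! 1) y \<le> C"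
    using z unfolding chain_shadow_def by blast
  have "gromov (xs!0) (last xs) (xs!1) \<le> C + \<delta>"
    using chain_list[OF hyp xs(4) xs(1)] C hyp_nonneg[OF hyp] by simp
  then have a: "gromov x z (xs!1) \<le> C + \<delta>" using xs by simp
  have "gromov x z y \<le> gromov x (xs!1) y + gromov x z (xs!1) + \<delta>" by (rule gromov_trans[OF hyp])
  then show ?thesis using a xs by simp
qed

lemma prefix_dist:
  assumes "\<And>i. isometry (u i)" "\<And>i. 1 \<le> i \<Longrightarrow> isometry (a i)" "\<And>i. 1 \<le> i \<Longrightarrow> isometry (b i)"
  shows "dist (prefix u a b n x) (prefix u a b n y) = dist (x::'a::metric_space) y"
  using assms
  by (induction n arbitrary: x y) (auto simp: isometry_def)



definition consec :: "nat set \<Rightarrow> nat \<Rightarrow> nat \<Rightarrow> bool" where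
  "consec P k k' \<longleftrightarrow> k \<in> P \<and> k' \<in> P \<and> k < k' \<and> (\<forall>j\<in>P. k < j \<longrightarrow> k' \<le> j)"

lemma consec_next:
  assumes "finite P" "k \<in> P" "k < Max P"
  shows "consec P k (Min {j\<in>P. k < j})"
proof -
  have "Max P \<in> P" using assms by (metis Max_in empty_iff)
  then have ne: "{j\<in>P. k < j} \<noteq> {}" using assms by auto
  have fin: "finite {j\<in>P. k < j}" using assms by auto
  have "Min {j\<in>P. k < j} \<in> {j\<in>P. k < j}" using Min_in[OF fin ne] .
  then show ?thesis unfolding consec_def using assms fin by auto
qed

locale piv =
  fixes \<delta> C0 D :: real and bp :: "'a::metric_space" and S :: "('a \<Rightarrow> 'a) set"
    and u a b :: "nat \<Rightarrow> 'a \<Rightarrow> 'a"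
  assumes hyp: "hyperbolic \<delta> TYPE('a)"
    and C0: "0 \<le> C0"
    and sch: "schottky (1/100) C0 D bp S"
    and uiso: "\<And>i. isometry (u i)"
    and aS: "\<And>i. 1 \<le> i \<Longrightarrow> a i \<in> S"
    and bS: "\<And>i. 1 \<le> i \<Longrightarrow> b i \<in> S"
    and DD: "D \<ge> 6 * C0 + 13 * \<delta> + 1"
begin

abbreviation "Yc \<equiv> yy bp u a b"
abbreviation "Ym \<equiv> ym bp u a b"
abbreviation "Yp \<equiv> yp bp u a b"
abbreviation "PP \<equiv> pivotal \<delta> C0 bp u a b"

lemma dpos: "\<delta> \<ge> 0" by (rule hyp_nonneg[OF hyp])

lemma aiso: "1 \<le> i \<Longrightarrow> isometry (a i)" using aS sch unfolding schottky_def by blast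
lemma biso: "1 \<le> i \<Longrightarrow> isometry (b i)" using bS sch unfolding schottky_def by blast

lemma pdist: "dist (prefix u a b n x) (prefix u a b n y) = dist x y"
  by (rule prefix_dist[OF uiso aiso biso])

lemma d1: "1 \<le> k \<Longrightarrow> dist (Ym k) (Yc k) \<ge> D"
  unfolding ym_def yy_def pdist using aS sch unfolding schottky_def by blast

lemma d2: "1 \<le> k \<Longrightarrow> dist (Yc k) (Yp k) \<ge> D"
proof -
  assume k: "1 \<le> k"
  have "dist (Yc k) (Yp k) = dist (a k bp) (a k (b k bp))"
    unfolding yp_def yy_def pdist ..
  also have "\<dots> = dist bp (b k bp)" using aiso[OF k] unfolding isometry_def by blast
  finally show ?thesis using bS[OF k] sch unfolding schottky_def by auto
qed

definition pinv :: "nat \<Rightarrow> bool" where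
  "pinv n \<longleftrightarrow> PP n \<subseteq> {1..n} \<and>
     (\<forall>k\<in>PP n. gromov (Ym k) (Yp k) (Yc k) \<le> C0) \<and>
     (\<forall>k k'. consec (PP n) k k' \<longrightarrow> gromov (Yc k) (Yc k') (Yp k) \<le> 3*C0+5*\<delta>
                                   \<and> gromov (Yc k) (Yp k') (Yc k') \<le> C0+\<delta>) \<and>
     (PP n \<noteq> {} \<longrightarrow> gromov (Yc (Max (PP n))) (Ym (Suc n)) (Yp (Max (PP n))) \<le> 2*C0+4*\<delta>)"

lemma pinv0: "pinv 0" unfolding pinv_def consec_def by simp

lemma pinv_step:
  assumes I: "pinv n" shows "pinv (Suc n)"
proof -
  define P where "P = PP n"
  define m where "m = Suc n"
  define yk where "yk = (if P = {} then bp else Yc (Max P))"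
  define cond where "cond = (gromov yk (Yc m) (Ym m) \<le> C0
            \<and> gromov (Ym m) (Yp m) (Yc m) \<le> C0
            \<and> gromov (Yc m) (Ym (Suc m)) (Yp m) \<le> C0)"
  define Ms where "Ms = {j \<in> P. Ym (Suc m) \<in> chain_shadow \<delta> (Yc j) (Yp j) (C0 + \<delta>)}"
  have PS: "PP (Suc n) = (if cond then insert m P else (if Ms = {} then {} else P \<inter> {1..Max Ms}))"
    apply (subst pivotal.simps(2))
    apply (unfold Let_def P_def[symmetric] m_def[symmetric] yk_def[symmetric]
      cond_def[symmetric] Ms_def[symmetric])
    by (rule refl)
  have sub: "P \<subseteq> {1..n}" and fin: "finite P" using I unfolding pinv_def P_def
    by (auto intro: finite_subset)
  have I2: "\<forall>k\<in>P. gromov (Ym k) (Yp k) (Yc k) \<le> C0" using I unfolding pinv_def P_def by blast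
  have I3: "\<And>k k'. consec P k k' \<Longrightarrow> gromov (Yc k) (Yc k') (Yp k) \<le> 3*C0+5*\<delta>
                                   \<and> gromov (Yc k) (Yp k') (Yc k') \<le> C0+\<delta>"
    using I unfolding pinv_def P_def by blast
  have I4: "P \<noteq> {} \<Longrightarrow> gromov (Yc (Max P)) (Ym m) (Yp (Max P)) \<le> 2*C0+4*\<delta>"
    using I unfolding pinv_def P_def m_def by blast
  show ?thesis
  proof (cases cond)
    case True
    then have c1: "gromov yk (Yc m) (Ym m) \<le> C0" and c2: "gromov (Ym m) (Yp m) (Yc m) \<le> C0"
      and c3: "gromov (Yc m) (Ym (Suc m)) (Yp m) \<le> C0" unfolding cond_def by auto
    have PS': "PP (Suc n) = insert m P" using PS True by simp
    have mx: "\<forall>j\<in>P. j < m" using sub unfolding m_def by auto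
    have Mx: "Max (insert m P) = m" using fin mx by (simp add: Max_insert2 less_imp_le)
    have cons: "gromov (Yc k) (Yc k') (Yp k) \<le> 3*C0+5*\<delta> \<and> gromov (Yc k) (Yp k') (Yc k') \<le> C0+\<delta>"
      if cs: "consec (insert m P) k k'" for k k'
    proof (cases "k' = m")
      case True
      have kP: "k \<in> P" using cs True unfolding consec_def by auto
      have kM: "k = Max P"
      proof (rule ccontr)
        assume "k \<noteq> Max P"
        then have "k < Max P" using kP fin by (simp add: order_le_neq_trans)
        moreover have "Max P \<in> insert m P" using kP fin by (metis Max_in empty_iff insertI2)
        ultimately have "m \<le> Max P" using cs True unfolding consec_def by blast
        then show False using mx kP fin by (metis Max_in empty_iff leD)
      qed
      have Pne: "P \<noteq> {}" using kP by auto
      have yk: "yk = Yc k" unfolding yk_def using Pne kM by simp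
      have i4: "gromov (Yc k) (Ym m) (Yp k) \<le> 2*C0+4*\<delta>" using I4[OF Pne] kM by simp
      have "gromov (Yc k) (Yc m) (Yp k) \<le> gromov (Yc k) (Ym m) (Yp k) + gromov (Yc k) (Yc m) (Ym m) + \<delta>"
        by (rule gromov_trans[OF hyp])
      then have A: "gromov (Yc k) (Yc k') (Yp k) \<le> 3*C0+5*\<delta>" using i4 c1 yk True by simp
      have j1: "gromov (Yp m) (Ym m) (Yc m) \<le> C0" using c2 by (simp add: gromov_sym)
      have j2: "gromov (Yc m) (Yc k) (Ym m) \<le> C0" using c1 yk by (simp add: gromov_sym)
      have j3: "dist (Yc m) (Ym m) \<ge> D" using d1[of m] unfolding m_def by (simp add: dist_commute)
      have "gromov (Yp m) (Yc k) (Yc m) \<le> C0 + \<delta>"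
        by (rule junction(1)[OF hyp j1 j2 j3]) (use DD C0 dpos in linarith)
      then show ?thesis using A True by (simp add: gromov_sym)
    next
      case False
      have "consec P k k'" using cs False mx unfolding consec_def by auto
      then show ?thesis using I3 by blast
    qed
    show ?thesis unfolding pinv_def PS' Mx
      using sub I2 c2 c3 cons C0 dpos unfolding m_def by auto
  next
    case False
    show ?thesis
    proof (cases "Ms = {}")
      case True
      then have "PP (Suc n) = {}" using PS False by simp
      then show ?thesis unfolding pinv_def consec_def by simp
    next
      case Mne: False
      define M where "M = Max Ms"
      have finM: "finite Ms" using fin unfolding Ms_def by auto
      have MMs: "M \<in> Ms" unfolding M_def using Max_in[OF finM Mne] .
      then have MP: "M \<in> P" and Msh: "Ym (Suc m) \<in> chain_shadow \<delta> (Yc M) (Yp M) (C0 + \<delta>)"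
        unfolding Ms_def by auto
      have PS': "PP (Suc n) = P \<inter> {1..M}" using PS False Mne unfolding M_def by simp
      have M1: "1 \<le> M" using MP sub by auto
      have MxP: "Max (P \<inter> {1..M}) = M"
        using MP M1 fin by (intro Max_eqI) auto
      have cons: "consec P k k'" if "consec (P \<inter> {1..M}) k k'" for k k'
        using that sub unfolding consec_def by (auto simp: subset_iff)
      have sh: "gromov (Yc M) (Ym (Suc m)) (Yp M) \<le> 2*(C0+\<delta>) + 2*\<delta>"
        by (rule shadow[OF hyp Msh]) (use C0 dpos in linarith)
      show ?thesis unfolding pinv_def PS' MxP
        using sub I2 I3 cons sh unfolding m_def by (auto simp: algebra_simps)
    qed
  qed
qed

lemma pinv_all: "pinv n"
  by (induction n) (auto intro: pinv0 pinv_step)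


lemma chainP:
  assumes "consec (PP n) k k'"
  shows "gromov (Yc k) (Ym (Suc n)) (Yc k') \<le> C0 + 3*\<delta>"
  using assms
proof (induction "Max (PP n) - k'" arbitrary: k k' rule: less_induct)
  case less
  define P where "P = PP n"
  define z where "z = Ym (Suc n)"
  have I: "pinv n" by (rule pinv_all)
  have sub: "P \<subseteq> {1..n}" and fin: "finite P" using I unfolding pinv_def P_def
    by (auto intro: finite_subset)
  have I3: "\<And>k k'. consec P k k' \<Longrightarrow> gromov (Yc k) (Yc k') (Yp k) \<le> 3*C0+5*\<delta>
                                   \<and> gromov (Yc k) (Yp k') (Yc k') \<le> C0+\<delta>"
    using I unfolding pinv_def P_def by blast
  have I4: "P \<noteq> {} \<Longrightarrow> gromov (Yc (Max P)) z (Yp (Max P)) \<le> 2*C0+4*\<delta>"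
    using I unfolding pinv_def P_def z_def by blast
  have cs: "consec P k k'" using less.prems P_def by simp
  have k'P: "k' \<in> P" using cs unfolding consec_def by auto
  have k'1: "1 \<le> k'" using k'P sub by auto
  have A: "gromov (Yc k) (Yp k') (Yc k') \<le> C0+\<delta>" using I3[OF cs] by blast
  have dk': "dist (Yc k') (Yp k') \<ge> D" by (rule d2[OF k'1])
  show ?case
  proof (cases "k' = Max P")
    case True
    have "gromov (Yc k') z (Yp k') \<le> 2*C0+4*\<delta>" using I4 True k'P by auto
    from junction(1)[OF hyp A this dk'] have "gromov (Yc k) z (Yc k') \<le> C0+\<delta>+\<delta>"
      using DD C0 dpos by linarith
    then show ?thesis unfolding z_def using dpos by simp
  next
    case False
    then have lt: "k' < Max P" using k'P fin by (simp add: order_le_neq_trans)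
    define k'' where "k'' = Min {j\<in>P. k' < j}"
    have cs2: "consec P k' k''" unfolding k''_def by (rule consec_next[OF fin k'P lt])
    have k''P: "k'' \<in> P" using cs2 unfolding consec_def by auto
    have "Max P - k'' < Max P - k'" using cs2 k''P fin lt unfolding consec_def
      by (meson Max_ge diff_less_mono2 order_less_le_trans)
    then have IH: "gromov (Yc k') z (Yc k'') \<le> C0 + 3*\<delta>"
      using less.hyps[of k'' k'] cs2 unfolding P_def z_def by blast
    have B: "gromov (Yc k') (Yc k'') (Yp k') \<le> 3*C0+5*\<delta>" using I3[OF cs2] by blast
    have j1: "gromov (Yc k) (Yc k'') (Yc k') \<le> C0+\<delta>+\<delta>"
      by (rule junction(1)[OF hyp A B dk']) (use DD C0 dpos in linarith)
    have j2: "dist (Yc k') (Yc k'') \<ge> D - (3*C0+5*\<delta>)"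
      by (rule junction(2)[OF hyp A B dk']) (use DD C0 dpos in linarith)
    have "gromov (Yc k) z (Yc k') \<le> C0+\<delta>+\<delta>+\<delta>"
      by (rule junction(1)[OF hyp j1 IH j2]) (use DD C0 dpos in linarith)
    then show ?thesis unfolding z_def by simp
  qed
qed

lemma Qbound:
  assumes "k \<in> PP n"
  shows "gromov (Yc k) (Ym (Suc n)) (Yp k) \<le> 4*C0 + 9*\<delta>"
proof -
  define P where "P = PP n"
  define z where "z = Ym (Suc n)"
  have I: "pinv n" by (rule pinv_all)
  have fin: "finite P" using I unfolding pinv_def P_def
    by (auto intro: finite_subset)
  have kP: "k \<in> P" using assms P_def by simp
  have I3: "\<And>k k'. consec P k k' \<Longrightarrow> gromov (Yc k) (Yc k') (Yp k) \<le> 3*C0+5*\<delta>"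
    using I unfolding pinv_def P_def by blast
  have I4: "P \<noteq> {} \<Longrightarrow> gromov (Yc (Max P)) z (Yp (Max P)) \<le> 2*C0+4*\<delta>"
    using I unfolding pinv_def P_def z_def by blast
  show ?thesis
  proof (cases "k = Max P")
    case True
    then show ?thesis using I4 kP C0 dpos unfolding z_def by fastforce
  next
    case False
    then have lt: "k < Max P" using kP fin by (simp add: order_le_neq_trans)
    define k' where "k' = Min {j\<in>P. k < j}"
    have cs: "consec P k k'" unfolding k'_def by (rule consec_next[OF fin kP lt])
    have a1: "gromov (Yc k) (Yc k') (Yp k) \<le> 3*C0+5*\<delta>" by (rule I3[OF cs])
    have a2: "gromov (Yc k) z (Yc k') \<le> C0 + 3*\<delta>" using chainP[of n k k'] cs
      unfolding P_def z_def by blast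
    have "gromov (Yc k) z (Yp k) \<le> gromov (Yc k) (Yc k') (Yp k) + gromov (Yc k) z (Yc k') + \<delta>"
      by (rule gromov_trans[OF hyp])
    then show ?thesis using a1 a2 unfolding z_def by linarith
  qed
qed

lemma final:
  assumes "k \<in> PP n"
  shows "is_chain (2 * C0 + 5 * \<delta>) (D - 6 * C0 - 13 * \<delta>) [Ym k, Yc k, Ym (Suc n)]"
proof -
  have I: "pinv n" by (rule pinv_all)
  have k1: "1 \<le> k" using I assms unfolding pinv_def by auto
  have L2: "gromov (Ym k) (Yp k) (Yc k) \<le> C0" using I assms unfolding pinv_def by blast
  have Q: "gromov (Yc k) (Ym (Suc n)) (Yp k) \<le> 4*C0 + 9*\<delta>" by (rule Qbound[OF assms])
  have g: "gromov (Ym k) (Ym (Suc n)) (Yc k) \<le> C0 + \<delta>"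
    by (rule junction(1)[OF hyp L2 Q d2[OF k1]]) (use DD C0 dpos in linarith)
  have dz: "dist (Yc k) (Ym (Suc n)) \<ge> D - (4*C0 + 9*\<delta>)"
    by (rule junction(2)[OF hyp L2 Q d2[OF k1]]) (use DD C0 dpos in linarith)
  have dk: "dist (Ym k) (Yc k) \<ge> D" by (rule d1[OF k1])
  show ?thesis unfolding is_chain_def
  proof (intro conjI allI impI)
    fix i assume "1 \<le> i \<and> i + 1 < length [Ym k, Yc k, Ym (Suc n)]"
    then have "i = 1" by auto
    then show "gromov ([Ym k, Yc k, Ym (Suc n)] ! (i - 1)) ([Ym k, Yc k, Ym (Suc n)] ! (i + 1))
         ([Ym k, Yc k, Ym (Suc n)] ! i) \<le> 2 * C0 + 5 * \<delta>" using g C0 dpos by simp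
  next
    fix i assume "1 \<le> i \<and> i < length [Ym k, Yc k, Ym (Suc n)]"
    then have "i = 1 \<or> i = 2" by auto
    then show "D - 6 * C0 - 13 * \<delta> \<le> dist ([Ym k, Yc k, Ym (Suc n)] ! (i - 1)) ([Ym k, Yc k, Ym (Suc n)] ! i)"
      using dk dz C0 dpos by (auto simp: numeral_2_eq_2)
  qed
qed

end


theorem lemma5p2:
  fixes \<delta> C0 D :: real and bp :: "'a::metric_space" and S :: "('a \<Rightarrow> 'a) set"
    and u a b :: "nat \<Rightarrow> 'a \<Rightarrow> 'a" and n k :: nat
  assumes "hyperbolic \<delta> TYPE('a)"
    and "0 \<le> C0"
    and "schottky (1/100) C0 D bp S"
    and "\<And>i. isometry (u i)"
    and "\<And>i. 1 \<le> i \<Longrightarrow> a i \<in> S"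
    and "\<And>i. 1 \<le> i \<Longrightarrow> b i \<in> S"
    and "D \<ge> 6 * C0 + 13 * \<delta> + 1"
    and "k \<in> pivotal \<delta> C0 bp u a b n"
    and "k \<noteq> Min (pivotal \<delta> C0 bp u a b n)"
  shows "is_chain (2 * C0 + 5 * \<delta>) (D - 6 * C0 - 13 * \<delta>)
           [ym bp u a b k, yy bp u a b k, ym bp u a b (Suc n)]"
proof -
  interpret piv \<delta> C0 D bp S u a b
    by (unfold_locales) (use assms in auto)
  show ?thesis by (rule final[OF assms(8)])
qed

end
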